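(* Let $X$ be a connected, finite, simple $3$-valent graph equipped with an orientation at each vertex, and let $k\in\mathbb{N}$. Then: (1) the Laplacian of $\mathrm{GC}_{2k,0}(X)$ has eigenvalue $4$ with multiplicity at least $\lceil k/2\rceil$; (2) the Laplacian of $\mathrm{GC}_{2k,0}(X)$ has eigenvalue $2$ with multiplicity at least $\lfloor k/2\rfloor$.
   Context: The Laplacian of a graph $Y$ acts on $f\in\mathbb{C}^{V(Y)}$ by $(\Delta_Y f)(p)=\deg(p)f(p)-\sum_{q\sim p}f(q)$. An orientation at each vertex is a cyclic ordering of the three edges at each vertex. Goldberg–Coxeter construction $\mathrm{GC}_{m,0}(X)$ for $m\geq1$: let $\omega=e^{\pi i/3}$ and $\mathbb{Z}[\omega]$ the triangular lattice. Let $T$ be the triangle with vertices $0,m,m\omega$. For each $p\in V(X)$ take a copy $\overline{\triangle}(p)$ of the graph whose vertices are the barycenters of the $m^2$ unit lattice triangles in $T$, adjacent when the triangles share an edge; the three sides of $T$ are matched with the three edges at $p$ so that the cyclic order at $p$ agrees with the counterclockwise order of the sides. For each edge $e=pq$, place $\overline{\triangle}(p)$ on $T$ with $e$ corresponding to the side from $m$ to $m\omega$ and $\overline{\triangle}(q)$ (preserving orientation) on the triangle with vertices $m,(1+\omega)m,\omega m$ with $e$ corresponding to the side from $\omega m$ to $m$, and identify all overlapping vertices and edges; the result is the $3$-valent graph $\mathrm{GC}_{m,0}(X)$. *)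

theory Defs
  imports Complex_Main "HOL-Library.Function_Algebras"
begin

definition simple_graph :: "'v set \<Rightarrow> ('v \<Rightarrow> 'v \<Rightarrow> bool) \<Rightarrow> bool" where
  "simple_graph V E \<longleftrightarrow> finite V \<and> (\<forall>p q. E p q \<longrightarrow> p \<in> V \<and> q \<in> V)
     \<and> (\<forall>p q. E p q \<longrightarrow> E q p) \<and> (\<forall>p. \<not> E p p)"

definition nbrs :: "'v set \<Rightarrow> ('v \<Rightarrow> 'v \<Rightarrow> bool) \<Rightarrow> 'v \<Rightarrow> 'v set" where
  "nbrs V E p = {q \<in> V. E p q}"

definition cubic :: "'v set \<Rightarrow> ('v \<Rightarrow> 'v \<Rightarrow> bool) \<Rightarrow> bool" where
  "cubic V E \<longleftrightarrow> (\<forall>p\<in>V. card (nbrs V E p) = 3)"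

definition connected_graph :: "'v set \<Rightarrow> ('v \<Rightarrow> 'v \<Rightarrow> bool) \<Rightarrow> bool" where
  "connected_graph V E \<longleftrightarrow> V \<noteq> {} \<and> (\<forall>p\<in>V. \<forall>q\<in>V. (p, q) \<in> {(x, y). E x y}\<^sup>*)"

text \<open>An orientation at each vertex of a 3-valent simple graph: a cyclic ordering of the
  three edges at p, i.e. (edges at p being in bijection with neighbours) a cyclic permutation
  \<open>\<sigma> p\<close> of the neighbour set of p, given by "next edge in the cyclic order".\<close>

definition orientation :: "'v set \<Rightarrow> ('v \<Rightarrow> 'v \<Rightarrow> bool) \<Rightarrow> ('v \<Rightarrow> 'v \<Rightarrow> 'v) \<Rightarrow> bool" where
  "orientation V E \<sigma> \<longleftrightarrow> (\<forall>p\<in>V. bij_betw (\<sigma> p) (nbrs V E p) (nbrs V E p)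
      \<and> (\<forall>q\<in>nbrs V E p. \<sigma> p q \<noteq> q \<and> \<sigma> p (\<sigma> p (\<sigma> p q)) = q))"

text \<open>A matching of the sides 0 (from 0 to m), 1 (from m to m\<omega>), 2 (from m\<omega> to 0) of T with
  the three edges (neighbours) at each vertex, such that the cyclic order at p agrees with
  the counterclockwise order of the sides.\<close>

definition side_matching ::
  "'v set \<Rightarrow> ('v \<Rightarrow> 'v \<Rightarrow> bool) \<Rightarrow> ('v \<Rightarrow> 'v \<Rightarrow> 'v) \<Rightarrow> ('v \<Rightarrow> nat \<Rightarrow> 'v) \<Rightarrow> bool" where
  "side_matching V E \<sigma> lab \<longleftrightarrow> (\<forall>p\<in>V. bij_betw (lab p) {0..<3} (nbrs V E p)
      \<and> (\<forall>i<3. \<sigma> p (lab p i) = lab p ((i + 1) mod 3)))"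

text \<open>Unit lattice triangles in T = conv{0, m, m\<omega>}, in lattice coordinates x + y\<omega>:
  \<open>Up a b\<close> has vertices (a,b),(a+1,b),(a,b+1)  (needs a+b < m);
  \<open>Dn a b\<close> has vertices (a+1,b),(a,b+1),(a+1,b+1) (needs a+b+1 < m).
  These are identified with their barycenters.\<close>

datatype tri = Up nat nat | Dn nat nat

definition tri_pos :: "nat \<Rightarrow> tri set" where
  "tri_pos m = {Up a b |a b. a + b < m} \<union> {Dn a b |a b. a + b + 1 < m}"

definition tri_adj :: "tri \<Rightarrow> tri \<Rightarrow> bool" where
  "tri_adj x y \<longleftrightarrow> (\<exists>a b. (x = Dn a b \<and> y \<in> {Up a b, Up (Suc a) b, Up a (Suc b)})
                        \<or> (y = Dn a b \<and> x \<in> {Up a b, Up (Suc a) b, Up a (Suc b)}))"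

text \<open>The t-th (t < m) unit triangle along side i of T, counted counterclockwise.\<close>

definition bdry :: "nat \<Rightarrow> nat \<Rightarrow> nat \<Rightarrow> tri" where
  "bdry m i t = (if i = 0 then Up t 0 else if i = 1 then Up (m - 1 - t) t else Up 0 (m - 1 - t))"

definition gc_verts :: "nat \<Rightarrow> 'v set \<Rightarrow> ('v \<times> tri) set" where
  "gc_verts m V = V \<times> tri_pos m"

text \<open>Adjacency of GC_{m,0}(X): edges inside each copy of the triangle graph, plus, for each
  edge pq of X matched with side i at p and side j at q, the edges created by gluing the two
  copies along that side (placing the copy of p on T with pq on the side m \<rightarrow> m\<omega>, and the
  copy of q, orientation preserved, on the triangle m, (1+\<omega>)m, \<omega>m); the t-th triangle along
  the side at p is then adjacent to the (m-1-t)-th triangle along the side at q.\<close>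

definition gc_adj :: "nat \<Rightarrow> ('v \<Rightarrow> 'v \<Rightarrow> bool) \<Rightarrow> ('v \<Rightarrow> nat \<Rightarrow> 'v)
    \<Rightarrow> ('v \<times> tri) \<Rightarrow> ('v \<times> tri) \<Rightarrow> bool" where
  "gc_adj m E lab u w \<longleftrightarrow>
     (fst u = fst w \<and> tri_adj (snd u) (snd w)) \<or>
     (\<exists>i j t. i < 3 \<and> j < 3 \<and> t < m \<and> E (fst u) (fst w) \<and>
        lab (fst u) i = fst w \<and> lab (fst w) j = fst u \<and>
        snd u = bdry m i t \<and> snd w = bdry m j (m - 1 - t))"

definition laplacian :: "'a set \<Rightarrow> ('a \<Rightarrow> 'a \<Rightarrow> bool) \<Rightarrow> ('a \<Rightarrow> complex) \<Rightarrow> 'a \<Rightarrow> complex" where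
  "laplacian W A f p = of_nat (card {q \<in> W. A p q}) * f p - (\<Sum>q\<in>{q \<in> W. A p q}. f q)"

text \<open>Functions in \<open>\<complex>^W\<close> are represented as functions vanishing outside W.\<close>

definition eigenspace :: "'a set \<Rightarrow> ('a \<Rightarrow> 'a \<Rightarrow> bool) \<Rightarrow> complex \<Rightarrow> ('a \<Rightarrow> complex) set" where
  "eigenspace W A \<mu> = {f. (\<forall>p. p \<notin> W \<longrightarrow> f p = 0) \<and> (\<forall>p\<in>W. laplacian W A f p = \<mu> * f p)}"

text \<open>Multiplicity of \<mu> as an eigenvalue of the Laplacian (a symmetric operator, so
  geometric = algebraic multiplicity): the complex dimension of the eigenspace.\<close>

definition eig_mult :: "'a set \<Rightarrow> ('a \<Rightarrow> 'a \<Rightarrow> bool) \<Rightarrow> complex \<Rightarrow> nat" where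
  "eig_mult W A \<mu> = vector_space.dim (\<lambda>c (f :: 'a \<Rightarrow> complex). (\<lambda>x. c * f x)) (eigenspace W A \<mu>)"

end

theory Submission
  imports Defs
begin



lemma vs_fun: "vector_space (\<lambda>c (f :: 'a \<Rightarrow> complex). (\<lambda>x. c * f x))"
  by unfold_locales (auto simp: fun_eq_iff algebra_simps)

lemma sum_fun_apply: "(\<Sum>v\<in>t. F v) x = (\<Sum>v\<in>t. F v x)" for F :: "'b \<Rightarrow> 'a \<Rightarrow> complex"
  by (induction t rule: infinite_finite_induct) auto

lemma eig_mult_ge:
  fixes W :: "'a set" and B :: "('a \<Rightarrow> complex) set"
  assumes fin: "finite W" and sub: "B \<subseteq> eigenspace W A \<mu>"
    and ind: "\<not> module.dependent (\<lambda>c (f :: 'a \<Rightarrow> complex). (\<lambda>x. c * f x)) B"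
  shows "card B \<le> eig_mult W A \<mu>"
proof -
  interpret vs: vector_space "\<lambda>c (f :: 'a \<Rightarrow> complex). (\<lambda>x. c * f x)" by (rule vs_fun)
  define D where "D = (\<lambda>w. (\<lambda>x. if x = w then (1::complex) else 0)) ` W"
  have finD: "finite D" using fin by (simp add: D_def)
  have spanD: "eigenspace W A \<mu> \<subseteq> vs.span D"
  proof
    fix f assume f: "f \<in> eigenspace W A \<mu>"
    have "f = (\<Sum>w\<in>W. (\<lambda>x. f w * (if x = w then 1 else 0)))"
    proof
      fix x
      show "f x = (\<Sum>w\<in>W. (\<lambda>x. f w * (if x = w then 1 else 0))) x"
      proof -
        have "(\<Sum>w\<in>W. f w * (if x = w then 1 else 0)) = (\<Sum>w\<in>W. if x = w then f x else 0)"
          by (rule sum.cong) auto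
        also have "\<dots> = (if x \<in> W then f x else 0)" using fin by (simp add: sum.delta)
        finally show ?thesis using f by (auto simp: sum_fun_apply eigenspace_def)
      qed
    qed
    also have "\<dots> \<in> vs.span D"
      by (intro vs.span_sum vs.span_scale vs.span_base) (auto simp: D_def)
    finally show "f \<in> vs.span D" .
  qed
  obtain Bs where Bs: "Bs \<subseteq> eigenspace W A \<mu>" "vs.independent Bs" "eigenspace W A \<mu> \<subseteq> vs.span Bs"
     "card Bs = vs.dim (eigenspace W A \<mu>)" by (rule vs.basis_exists)
  have "finite Bs" using vs.independent_span_bound[OF finD Bs(2)] Bs(1) spanD by auto
  then have "card B \<le> card Bs" using vs.independent_span_bound[OF _ ind] sub Bs(3) by auto
  then show ?thesis using Bs(4) by (simp add: eig_mult_def)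
qed




lemma finite_tri_pos: "finite (tri_pos m)"
proof -
  have "tri_pos m \<subseteq> (\<lambda>(a,b). Up a b) ` ({..<m} \<times> {..<m}) \<union> (\<lambda>(a,b). Dn a b) ` ({..<m} \<times> {..<m})"
    by (auto simp: tri_pos_def)
  then show ?thesis by (rule finite_subset) auto
qed

lemma bdry_in: "i < 3 \<Longrightarrow> t < m \<Longrightarrow> bdry m i t \<in> tri_pos m"
  by (auto simp: bdry_def tri_pos_def)

lemma bdry_inj: "t < m \<Longrightarrow> t' < m \<Longrightarrow> bdry m i t = bdry m i t' \<Longrightarrow> t = t'"
  by (auto simp: bdry_def split: if_splits)

definition lift :: "'v set \<Rightarrow> nat \<Rightarrow> (tri \<Rightarrow> complex) \<Rightarrow> ('v \<times> tri) \<Rightarrow> complex" where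
  "lift V m h = (\<lambda>w. if fst w \<in> V \<and> snd w \<in> tri_pos m then h (snd w) else 0)"

lemma lift_eigen:
  assumes sgr: "simple_graph V E" and sm: "side_matching V E \<sigma> lab"
    and prof: "\<And>i t. i < 3 \<Longrightarrow> t < m \<Longrightarrow> h (bdry m i t) = h (bdry m 0 t)"
    and loc: "\<And>x. x \<in> tri_pos m \<Longrightarrow>
       (\<Sum>y\<in>{y\<in>tri_pos m. tri_adj x y}. h x - h y)
     + (\<Sum>it\<in>{(i,t). i < 3 \<and> t < m \<and> bdry m i t = x}. h x - h (bdry m 0 (m - 1 - snd it)))
     = \<mu> * h x"
  shows "lift V m h \<in> eigenspace (gc_verts m V) (gc_adj m E lab) \<mu>"
proof -
  let ?W = "gc_verts m V"
  let ?f = "lift V m h"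
  have finV: "finite V" and Ein: "\<And>p q. E p q \<Longrightarrow> p \<in> V \<and> q \<in> V"
    and Esym: "\<And>p q. E p q \<Longrightarrow> E q p" and Eirr: "\<And>p. \<not> E p p"
    using sgr by (auto simp: simple_graph_def)
  have finW: "finite ?W" using finV finite_tri_pos by (simp add: gc_verts_def)
  have bij: "\<And>p. p \<in> V \<Longrightarrow> bij_betw (lab p) {0..<3} (nbrs V E p)"
    using sm by (auto simp: side_matching_def)
  have labE: "\<And>p i. p \<in> V \<Longrightarrow> i < 3 \<Longrightarrow> E p (lab p i)"
  proof -
    fix p and i :: nat assume "p \<in> V" "i < 3"
    then have "lab p i \<in> lab p ` {0..<3}" by auto
    then show "E p (lab p i)" using bij[OF \<open>p \<in> V\<close>] by (auto simp: bij_betw_def nbrs_def)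
  qed
  have labinj: "\<And>p i i'. p \<in> V \<Longrightarrow> i < 3 \<Longrightarrow> i' < 3 \<Longrightarrow> lab p i = lab p i' \<Longrightarrow> i = i'"
    using bij by (auto simp: bij_betw_def inj_on_def)
  have labsurj: "\<And>p q. p \<in> V \<Longrightarrow> E p q \<Longrightarrow> \<exists>j<3. lab p j = q"
  proof -
    fix p q assume "p \<in> V" "E p q"
    then have "q \<in> nbrs V E p" using Ein by (auto simp: nbrs_def)
    then have "q \<in> lab p ` {0..<3}" using bij[OF \<open>p \<in> V\<close>] by (auto simp: bij_betw_def)
    then show "\<exists>j<3. lab p j = q" by auto
  qed
  define J where "J q p = (THE j. j < 3 \<and> lab q j = p)" for q p
  have J: "\<And>p q. E p q \<Longrightarrow> J q p < 3 \<and> lab q (J q p) = p"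
  proof -
    fix p q assume "E p q"
    then have "q \<in> V" "E q p" using Ein Esym by auto
    then obtain j where j: "j < 3" "lab q j = p" using labsurj by blast
    have "J q p = j" unfolding J_def
      by (rule the_equality) (use j labinj[OF \<open>q \<in> V\<close>] in auto)
    then show "J q p < 3 \<and> lab q (J q p) = p" using j by simp
  qed
  have Jeq: "\<And>p q j. E p q \<Longrightarrow> j < 3 \<Longrightarrow> lab q j = p \<Longrightarrow> J q p = j"
    using J labinj Ein by (metis)
  show ?thesis unfolding eigenspace_def
  proof (intro CollectI conjI allI impI ballI)
    fix w assume "w \<notin> ?W" then show "?f w = 0" by (cases w) (auto simp: lift_def gc_verts_def)
  next
    fix w assume "w \<in> ?W"
    then obtain p x where w: "w = (p, x)" "p \<in> V" "x \<in> tri_pos m" by (auto simp: gc_verts_def)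
    define N where "N = {w' \<in> ?W. gc_adj m E lab w w'}"
    define Y where "Y = {y\<in>tri_pos m. tri_adj x y}"
    define P where "P = {(i,t). i < 3 \<and> t < m \<and> bdry m i t = x}"
    define ext where "ext = (\<lambda>(i,t). (lab p i, bdry m (J (lab p i) p) (m - 1 - t)))"
    have finN: "finite N" using finW by (simp add: N_def)
    have lap: "laplacian ?W (gc_adj m E lab) ?f w = (\<Sum>w'\<in>N. ?f w - ?f w')"
      by (simp add: laplacian_def N_def sum_subtractf)
    have Neq: "N = Pair p ` Y \<union> ext ` P"
    proof (intro equalityI subsetI)
      fix w' assume "w' \<in> N"
      then have w'W: "w' \<in> ?W" and adj: "gc_adj m E lab (p,x) w'" by (auto simp: N_def w)
      from adj show "w' \<in> Pair p ` Y \<union> ext ` P"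
        unfolding gc_adj_def
      proof (elim disjE exE conjE)
        assume "fst (p, x) = fst w'" "tri_adj (snd (p, x)) (snd w')"
        then show ?thesis using w'W by (cases w') (auto simp: Y_def gc_verts_def)
      next
        fix i j t assume h: "i < 3" "j < 3" "t < m" "E (fst (p, x)) (fst w')"
          "lab (fst (p, x)) i = fst w'" "lab (fst w') j = fst (p, x)"
          "snd (p, x) = bdry m i t" "snd w' = bdry m j (m - 1 - t)"
        have "J (fst w') p = j" using Jeq[of p "fst w'" j] h by simp
        then have "J (lab p i) p = j" using h by simp
        then have "w' = ext (i,t)" using h by (cases w') (auto simp: ext_def)
        moreover have "(i,t) \<in> P" using h by (auto simp: P_def)
        ultimately show ?thesis by blast
      qed
    next
      fix w' assume "w' \<in> Pair p ` Y \<union> ext ` P"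
      then show "w' \<in> N"
      proof
        assume "w' \<in> Pair p ` Y"
        then show ?thesis using w by (auto simp: Y_def N_def gc_verts_def gc_adj_def)
      next
        assume "w' \<in> ext ` P"
        then obtain i t where it: "(i,t) \<in> P" "w' = ext (i,t)" by auto
        let ?q = "lab p i"
        have i: "i < 3" "t < m" "bdry m i t = x" using it by (auto simp: P_def)
        have Epq: "E p ?q" using labE w i by auto
        have Jq: "J ?q p < 3" "lab ?q (J ?q p) = p" using J[OF Epq] by auto
        have "w' \<in> ?W" using it Jq bdry_in Ein[OF Epq] i by (auto simp: ext_def gc_verts_def)
        moreover have "gc_adj m E lab w w'"
          unfolding gc_adj_def using w it i Epq Jq
          by (intro disjI2 exI[of _ i] exI[of _ "J ?q p"] exI[of _ t]) (auto simp: ext_def)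
        ultimately show ?thesis by (simp add: N_def)
      qed
    qed
    have disj: "Pair p ` Y \<inter> ext ` P = {}"
    proof -
      have "fst (ext it) \<noteq> p" if "it \<in> P" for it
        using that labE[of p] w Eirr by (auto simp: P_def ext_def) metis
      then show ?thesis by (metis (no_types, lifting) disjoint_iff fst_conv imageE)
    qed
    have injext: "inj_on ext P"
    proof
      fix it it' assume "it \<in> P" "it' \<in> P" "ext it = ext it'"
      then show "it = it'" using labinj[OF w(2)] bdry_inj[of _ m _ ]
        by (cases it; cases it') (auto simp: P_def ext_def, metis)
    qed
    have finY: "finite Y" using finite_tri_pos by (simp add: Y_def)
    have finP: "finite P"
    proof -
      have "P \<subseteq> {..<3} \<times> {..<m}" by (auto simp: P_def)
      then show ?thesis by (rule finite_subset) auto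
    qed
    have "(\<Sum>w'\<in>N. ?f w - ?f w') = (\<Sum>w'\<in>Pair p ` Y. ?f w - ?f w') + (\<Sum>w'\<in>ext ` P. ?f w - ?f w')"
      unfolding Neq by (rule sum.union_disjoint) (use finY finP disj in auto)
    also have "(\<Sum>w'\<in>Pair p ` Y. ?f w - ?f w') = (\<Sum>y\<in>Y. h x - h y)"
      by (subst sum.reindex) (auto simp: inj_on_def lift_def w Y_def)
    also have "(\<Sum>w'\<in>ext ` P. ?f w - ?f w') = (\<Sum>it\<in>P. h x - h (bdry m 0 (m - 1 - snd it)))"
    proof -
      have eq: "?f w - ?f (ext it) = h x - h (bdry m 0 (m - 1 - snd it))" if "it \<in> P" for it
      proof -
        from that obtain i t where it: "it = (i,t)" "i < 3" "t < m" "bdry m i t = x" by (auto simp: P_def)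
        have Epq: "E p (lab p i)" using labE w it by auto
        have Jq: "J (lab p i) p < 3" using J[OF Epq] by auto
        have "?f (ext it) = h (bdry m 0 (m - 1 - t))"
          using it Jq bdry_in Ein[OF Epq] prof[OF Jq, of "m - 1 - t"]
          by (auto simp: ext_def lift_def)
        then show ?thesis using w it by (simp add: lift_def)
      qed
      show ?thesis by (simp add: sum.reindex[OF injext] eq cong: sum.cong)
    qed
    finally show "laplacian ?W (gc_adj m E lab) ?f w = \<mu> * ?f w"
      using lap loc[OF w(3)] w by (simp add: Y_def P_def lift_def)
  qed
qed




lemma Y_Up_set: "a + b < m \<Longrightarrow> {y\<in>tri_pos m. tri_adj (Up a b) y} =
   (if a+b+1<m then {Dn a b} else {}) \<union> (if 0<a then {Dn (a-1) b} else {}) \<union> (if 0<b then {Dn a (b-1)} else {})"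
  apply (rule set_eqI)
  subgoal for y by (cases y) (auto simp: tri_pos_def tri_adj_def)
  done

lemma Y_Dn_set: "a + b + 1 < m \<Longrightarrow> {y\<in>tri_pos m. tri_adj (Dn a b) y} = {Up a b, Up (Suc a) b, Up a (Suc b)}"
  apply (rule set_eqI)
  subgoal for y by (cases y) (auto simp: tri_pos_def tri_adj_def)
  done

lemma P_Up_set: "a + b < m \<Longrightarrow> {(i,t). i < 3 \<and> t < m \<and> bdry m i t = Up a b} =
   (if b = 0 then {(0,a)} else {}) \<union> (if a + b + 1 = m then {(1,b)} else {}) \<union> (if a = 0 then {(2, m-1-b)} else {})"
  apply (rule set_eqI)
  apply (auto simp: bdry_def split: if_splits)
  done

lemma P_Dn_set: "{(i,t). i < 3 \<and> t < m \<and> bdry m i t = Dn a b} = {}"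
  by (auto simp: bdry_def split: if_splits)

lemma Y_Up_sum: "a + b < m \<Longrightarrow> (\<Sum>y\<in>{y\<in>tri_pos m. tri_adj (Up a b) y}. F y) =
   (if a+b+1<m then F (Dn a b) else 0) + (if 0<a then F (Dn (a-1) b) else 0) + (if 0<b then F (Dn a (b-1)) else 0)"
  unfolding Y_Up_set
  by (cases "a+b+1<m"; cases "0<a"; cases "0<b") (auto simp: add_ac)

lemma P_Up_sum: "a + b < m \<Longrightarrow> (\<Sum>it\<in>{(i,t). i < 3 \<and> t < m \<and> bdry m i t = Up a b}. F it) =
   (if b = 0 then F (0,a) else 0) + (if a + b + 1 = m then F (1,b) else 0) + (if a = 0 then F (2, m-1-b) else 0)"
  unfolding P_Up_set
  by (cases "b = 0"; cases "a + b + 1 = m"; cases "a = 0") (auto simp: add_ac)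




definition sg :: "nat \<Rightarrow> complex" where "sg n = (-1)^n"

lemma sg_0[simp]: "sg 0 = 1" and sg_Suc[simp]: "sg (Suc n) = - sg n"
  and sg_add[simp]: "sg (a + b) = sg a * sg b"
  by (auto simp: sg_def power_add)

lemma sg_sq[simp]: "sg a * sg a = 1"
  by (simp add: sg_def power_add[symmetric])

lemma sg_cases: "sg n = 1 \<or> sg n = -1"
  by (induction n) auto

fun hh :: "nat \<Rightarrow> (nat \<Rightarrow> complex) \<Rightarrow> complex \<Rightarrow> tri \<Rightarrow> complex" where
  "hh m g l (Up a b) = g b * sg a + g (m-1-a-b) * sg b - g a * sg (a+b)"
| "hh m g l (Dn a b) = l * (g (b+1) * sg a + g (m-1-a-b) * sg b + g (a+1) * sg (a+b))"

lemma Up_eq: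
  assumes m: "m = a + b + r + 1" and ev: "sg m = 1" and g0: "g 0 = 0"
    and sym: "\<And>x y. x + y = m \<Longrightarrow> g x = \<epsilon> * g y"
    and par: "(\<epsilon> = 1 \<and> l = -1 \<and> \<mu> = 4) \<or> (\<epsilon> = -1 \<and> l = 1 \<and> \<mu> = 2)"
  shows "(if a+b+1<m then hh m g l (Up a b) - hh m g l (Dn a b) else 0)
       + (if 0<a then hh m g l (Up a b) - hh m g l (Dn (a-1) b) else 0)
       + (if 0<b then hh m g l (Up a b) - hh m g l (Dn a (b-1)) else 0)
       + (if b = 0 then hh m g l (Up a b) - hh m g l (Up (m-1-a) 0) else 0)
       + (if a + b + 1 = m then hh m g l (Up a b) - hh m g l (Up (m-1-b) 0) else 0)
       + (if a = 0 then hh m g l (Up a b) - hh m g l (Up (m-1-(m-1-b)) 0) else 0)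
       = \<mu> * hh m g l (Up a b)"
proof -
  have ev': "sg a * sg b * sg r = -1" using ev by (simp add: m) (metis minus_minus)
  have c1: "?thesis" if "a = 0" "b = 0" "r = 0" 
    using that sym[of "Suc 0" "0"]  ev' par g0 by (auto simp: m algebra_simps)
  have c2: "?thesis" if "a = 0" "b = 0" "r = Suc r'" for r'
    using that sym[of "Suc (Suc r')" "0"] sym[of "Suc r'" "Suc 0"] sym[of "Suc (Suc 0)" "r'"] sg_cases[of r'] ev' par g0 by (auto simp: m algebra_simps)
  have c3: "?thesis" if "a = 0" "b = Suc b'" "r = 0" for b'
    using that sym[of "Suc (Suc b')" "0"] sym[of "Suc b'" "Suc 0"] sym[of "Suc (Suc 0)" "b'"] sg_cases[of b'] ev' par g0 by (auto simp: m algebra_simps)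
  have c4: "?thesis" if "a = 0" "b = Suc b'" "r = Suc r'" for b' r'
    using that sym[of "Suc (Suc (Suc r'))" "b'"] sym[of "Suc (Suc r')" "Suc b'"] sym[of "Suc (Suc b')" "Suc r'"] sym[of "Suc (Suc (Suc b'))" "r'"] sg_cases[of b'] sg_cases[of r'] ev' par g0 by (auto simp: m algebra_simps)
  have c5: "?thesis" if "a = Suc a'" "b = 0" "r = 0" for a'
    using that sym[of "Suc (Suc a')" "0"] sym[of "Suc a'" "Suc 0"] sym[of "Suc (Suc 0)" "a'"] sg_cases[of a'] ev' par g0 by (auto simp: m algebra_simps)
  have c6: "?thesis" if "a = Suc a'" "b = 0" "r = Suc r'" for a' r'
    using that sym[of "Suc (Suc (Suc r'))" "a'"] sym[of "Suc (Suc r')" "Suc a'"] sym[of "Suc (Suc a')" "Suc r'"] sym[of "Suc (Suc (Suc a'))" "r'"] sg_cases[of a'] sg_cases[of r'] ev' par g0 by (auto simp: m algebra_simps)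
  have c7: "?thesis" if "a = Suc a'" "b = Suc b'" "r = 0" for a' b'
    using that sym[of "Suc (Suc (Suc b'))" "a'"] sym[of "Suc (Suc b')" "Suc a'"] sym[of "Suc (Suc a')" "Suc b'"] sym[of "Suc (Suc (Suc a'))" "b'"] sg_cases[of a'] sg_cases[of b'] ev' par g0 by (auto simp: m algebra_simps)
  have c8: "?thesis" if "a = Suc a'" "b = Suc b'" "r = Suc r'" for a' b' r'
    using that  sg_cases[of a'] sg_cases[of b'] sg_cases[of r'] ev' par g0 by (auto simp: m algebra_simps)

  show ?thesis using c1 c2 c3 c4 c5 c6 c7 c8 by (cases a; cases b; cases r) auto
qed


lemma Dn_eq:
  assumes m: "m = a + b + r + 2"
    and par: "(\<epsilon> = 1 \<and> l = -1 \<and> \<mu> = 4) \<or> (\<epsilon> = -1 \<and> l = 1 \<and> \<mu> = 2)"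
  shows "(hh m g l (Dn a b) - hh m g l (Up a b)) + (hh m g l (Dn a b) - hh m g l (Up (Suc a) b))
     + (hh m g l (Dn a b) - hh m g l (Up a (Suc b))) = \<mu> * hh m g l (Dn a b)"
  using par by (auto simp: m algebra_simps numeral_eq_Suc)

lemma prof_eq:
  assumes ev: "sg m = 1" and g0: "g 0 = 0" and i: "i < 3" and t: "t < m"
  shows "hh m g l (bdry m i t) = hh m g l (bdry m 0 t)"
proof -
  obtain s where m: "m = t + s + 1" using t by (metis add.commute add_Suc_right less_imp_Suc_add plus_1_eq_Suc)
  have ev': "sg t * sg s = -1" using ev by (simp add: m) (metis minus_minus)
  have "i = 0 \<or> i = 1 \<or> i = 2" using i by auto
  then show ?thesis using ev' g0 sg_cases[of t] sg_cases[of s]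
    by (auto simp: bdry_def m algebra_simps)
qed

lemma recover:
  assumes ev: "sg m = 1" and g0: "g 0 = 0" and t: "b < m"
  shows "hh m g l (Up 0 b) - sg b * hh m g l (Up (m - 1 - b) b) = 2 * g b"
proof -
  obtain s where m: "m = b + s + 1" using t by (metis add.commute add_Suc_right less_imp_Suc_add plus_1_eq_Suc)
  have ev': "sg b * sg s = -1" using ev by (simp add: m) (metis minus_minus)
  show ?thesis using ev' g0 sg_cases[of b] sg_cases[of s]
    by (auto simp: m algebra_simps)
qed







lemma indep_family:
  fixes F :: "nat \<Rightarrow> ('a \<Rightarrow> complex)" and z1 z2 :: "nat \<Rightarrow> 'a" and s :: "nat \<Rightarrow> complex"
  assumes diag: "\<And>b c. b \<in> C \<Longrightarrow> c \<in> C \<Longrightarrow> (F c (z1 b) - s b * F c (z2 b) \<noteq> 0) \<longleftrightarrow> b = c"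
  shows "inj_on F C" and "\<not> module.dependent (\<lambda>c (f :: 'a \<Rightarrow> complex). (\<lambda>x. c * f x)) (F ` C)"
proof -
  show "inj_on F C"
  proof
    fix b c assume bc: "b \<in> C" "c \<in> C" "F b = F c"
    then have "F c (z1 b) - s b * F c (z2 b) \<noteq> 0" using diag[of b b] by auto
    then show "b = c" using diag[of b c] bc by auto
  qed
  show "\<not> module.dependent (\<lambda>c (f :: 'a \<Rightarrow> complex). (\<lambda>x. c * f x)) (F ` C)"
  proof
    assume "module.dependent (\<lambda>c (f :: 'a \<Rightarrow> complex). (\<lambda>x. c * f x)) (F ` C)"
    then obtain t u where t: "finite t" "t \<subseteq> F ` C" "(\<Sum>v\<in>t. (\<lambda>x. u v * v x)) = 0" and v: "\<exists>v\<in>t. u v \<noteq> 0"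
      by (auto simp: module.dependent_explicit[OF module_iff_vector_space[THEN iffD2, OF vs_fun]])
    from v obtain v where vt: "v \<in> t" "u v \<noteq> 0" by auto
    then obtain b where b: "b \<in> C" "v = F b" using t by auto
    have z: "(\<Sum>w\<in>t. u w * (w (z1 b) - s b * w (z2 b))) = 0"
    proof -
      have "(\<Sum>w\<in>t. u w * (w (z1 b) - s b * w (z2 b)))
          = (\<Sum>v\<in>t. (\<lambda>x. u v * v x)) (z1 b) - s b * (\<Sum>v\<in>t. (\<lambda>x. u v * v x)) (z2 b)"
        by (simp add: sum_fun_apply algebra_simps sum_subtractf sum_distrib_left)
      then show ?thesis using t(3) by simp
    qed
    have other: "u w * (w (z1 b) - s b * w (z2 b)) = 0" if wt: "w \<in> t - {v}" for w
    proof -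
      obtain c where c: "c \<in> C" "w = F c" using wt t by auto
      have "c \<noteq> b" using wt c b by auto
      then show ?thesis using diag[of b c] b c by auto
    qed
    have "(\<Sum>w\<in>t. u w * (w (z1 b) - s b * w (z2 b))) = u v * (v (z1 b) - s b * v (z2 b))"
    proof -
      have "(\<Sum>w\<in>t - {v}. u w * (w (z1 b) - s b * w (z2 b))) = 0"
        by (rule sum.neutral) (use other in blast)
      then show ?thesis using t(1) vt(1) by (simp add: sum.remove)
    qed
    then have "u v * (v (z1 b) - s b * v (z2 b)) = 0" using z by simp
    moreover have "v (z1 b) - s b * v (z2 b) \<noteq> 0" using diag[of b b] b by auto
    ultimately show False using vt by simp
  qed
qed




lemma bdry0: "bdry m 0 t = Up t 0" by (simp add: bdry_def)

lemma loc_hh: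
  assumes ev: "sg m = 1" and g0: "g 0 = 0"
    and sym: "\<And>x y. x + y = m \<Longrightarrow> g x = \<epsilon> * g y"
    and par: "(\<epsilon> = 1 \<and> l = -1 \<and> \<mu> = 4) \<or> (\<epsilon> = -1 \<and> l = 1 \<and> \<mu> = 2)"
    and x: "x \<in> tri_pos m"
  shows "(\<Sum>y\<in>{y\<in>tri_pos m. tri_adj x y}. hh m g l x - hh m g l y)
     + (\<Sum>it\<in>{(i,t). i < 3 \<and> t < m \<and> bdry m i t = x}. hh m g l x - hh m g l (bdry m 0 (m - 1 - snd it)))
     = \<mu> * hh m g l x"
proof (cases x)
  case (Up a b)
  then have ab: "a + b < m" using x by (auto simp: tri_pos_def)
  then obtain r where m: "m = a + b + r + 1"
    by (metis add.commute add_Suc_right less_imp_Suc_add plus_1_eq_Suc)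
  show ?thesis
    unfolding Up Y_Up_sum[OF ab] P_Up_sum[OF ab] snd_conv bdry0
    using Up_eq[where g=g and \<epsilon>=\<epsilon> and l=l and \<mu>=\<mu>, OF m ev g0 sym par] by (simp only: add.assoc)
next
  case (Dn a b)
  then have ab: "a + b + 1 < m" using x by (auto simp: tri_pos_def)
  then obtain r where m: "m = a + b + r + 2"
    by (metis add.commute add_Suc_right less_imp_Suc_add plus_1_eq_Suc add_2_eq_Suc')
  show ?thesis
    unfolding Dn Y_Dn_set[OF ab] P_Dn_set
    using Dn_eq[where g=g and \<epsilon>=\<epsilon> and l=l and \<mu>=\<mu>, OF m par] by (simp del: hh.simps)
qed

definition GG :: "nat \<Rightarrow> complex \<Rightarrow> nat \<Rightarrow> nat \<Rightarrow> complex" where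
  "GG m \<epsilon> c x = (if x = c then 1 else 0) + \<epsilon> * (if x = m - c then 1 else 0)"

lemma main_family:
  fixes V :: "'v set" and E :: "'v \<Rightarrow> 'v \<Rightarrow> bool" and lab :: "'v \<Rightarrow> nat \<Rightarrow> 'v"
    and l \<epsilon> \<mu> :: complex
  assumes sgr: "simple_graph V E" and sm: "side_matching V E \<sigma> lab" and Vne: "V \<noteq> {}"
    and ev: "sg m = 1"
    and par: "(\<epsilon> = 1 \<and> l = -1 \<and> \<mu> = 4) \<or> (\<epsilon> = -1 \<and> l = 1 \<and> \<mu> = 2)"
    and C: "\<And>c. c \<in> C \<Longrightarrow> 0 < c \<and> c < m"
    and diag: "\<And>b c. b \<in> C \<Longrightarrow> c \<in> C \<Longrightarrow> GG m \<epsilon> c b \<noteq> 0 \<longleftrightarrow> b = c"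
    and finC: "finite C"
  shows "card C \<le> eig_mult (gc_verts m V) (gc_adj m E lab) \<mu>"
proof -
  define F where "F c = lift V m (hh m (GG m \<epsilon> c) l)" for c
  obtain p0 where p0: "p0 \<in> V" using Vne by auto
  have finV: "finite V" using sgr by (simp add: simple_graph_def)
  have eps2: "\<epsilon> * \<epsilon> = 1" using par by auto
  have eig: "F c \<in> eigenspace (gc_verts m V) (gc_adj m E lab) \<mu>" if c: "c \<in> C" for c
  proof -
    have g0: "GG m \<epsilon> c 0 = 0" using C[OF c] by (simp add: GG_def)
    have sym: "GG m \<epsilon> c x = \<epsilon> * GG m \<epsilon> c y" if "x + y = m" for x y
      using that C[OF c] eps2 by (auto simp: GG_def algebra_simps)
    show ?thesis unfolding F_def
    proof (rule lift_eigen[OF sgr sm])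
      fix i t :: nat assume "i < 3" "t < m"
      then show "hh m (GG m \<epsilon> c) l (bdry m i t) = hh m (GG m \<epsilon> c) l (bdry m 0 t)"
        by (rule prof_eq[where g="GG m \<epsilon> c", OF ev g0])
    next
      fix x assume "x \<in> tri_pos m"
      then show "(\<Sum>y\<in>{y\<in>tri_pos m. tri_adj x y}. hh m (GG m \<epsilon> c) l x - hh m (GG m \<epsilon> c) l y)
     + (\<Sum>it\<in>{(i,t). i < 3 \<and> t < m \<and> bdry m i t = x}. hh m (GG m \<epsilon> c) l x - hh m (GG m \<epsilon> c) l (bdry m 0 (m - 1 - snd it)))
     = \<mu> * hh m (GG m \<epsilon> c) l x"
        using loc_hh[where g="GG m \<epsilon> c" and \<epsilon>=\<epsilon> and l=l and \<mu>=\<mu>, OF ev g0 sym par]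
        by (simp only:)
    qed
  qed
  have val: "F c (p0, Up 0 b) - sg b * F c (p0, Up (m - 1 - b) b) = 2 * GG m \<epsilon> c b"
    if "b \<in> C" "c \<in> C" for b c
  proof -
    have "b < m" using C[OF that(1)] by auto
    then have in1: "Up 0 b \<in> tri_pos m" and in2: "Up (m - 1 - b) b \<in> tri_pos m" by (auto simp: tri_pos_def)
    have g0: "GG m \<epsilon> c 0 = 0" using C[OF that(2)] by (simp add: GG_def)
    have "F c (p0, Up 0 b) = hh m (GG m \<epsilon> c) l (Up 0 b)"
      "F c (p0, Up (m - 1 - b) b) = hh m (GG m \<epsilon> c) l (Up (m - 1 - b) b)"
      unfolding F_def lift_def using p0 in1 in2 by (simp_all del: hh.simps)
    then show ?thesis using recover[where g="GG m \<epsilon> c" and l=l, OF ev g0 \<open>b < m\<close>] by (simp del: hh.simps)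
  qed
  have diag': "(F c (p0, Up 0 b) - sg b * F c (p0, Up (m - 1 - b) b) \<noteq> 0) \<longleftrightarrow> b = c"
    if "b \<in> C" "c \<in> C" for b c
    using val[OF that] diag[OF that] by simp
  have inj: "inj_on F C" and ind: "\<not> module.dependent (\<lambda>c (f :: ('v \<times> tri) \<Rightarrow> complex). (\<lambda>x. c * f x)) (F ` C)"
    using indep_family[of C F "\<lambda>b. (p0, Up 0 b)" sg "\<lambda>b. (p0, Up (m - 1 - b) b)"] diag' by auto
  have "card (F ` C) \<le> eig_mult (gc_verts m V) (gc_adj m E lab) \<mu>"
    by (rule eig_mult_ge[OF _ _ ind]) (use finV finite_tri_pos eig in \<open>auto simp: gc_verts_def\<close>)
  then show ?thesis using card_image[OF inj] by simp
qed

theorem theorem1p4: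
  fixes V :: "'v set" and E :: "'v \<Rightarrow> 'v \<Rightarrow> bool"
    and \<sigma> :: "'v \<Rightarrow> 'v \<Rightarrow> 'v" and lab :: "'v \<Rightarrow> nat \<Rightarrow> 'v" and k :: nat
  assumes "simple_graph V E" and "connected_graph V E" and "cubic V E"
    and "orientation V E \<sigma>" and "side_matching V E \<sigma> lab"
    and "k \<ge> 1"
  shows "eig_mult (gc_verts (2 * k) V) (gc_adj (2 * k) E lab) 4 \<ge> nat \<lceil>real k / 2\<rceil>
     \<and> eig_mult (gc_verts (2 * k) V) (gc_adj (2 * k) E lab) 2 \<ge> nat \<lfloor>real k / 2\<rfloor>"
proof
  have Vne: "V \<noteq> {}" using assms(2) by (simp add: connected_graph_def)
  have ev: "sg (2 * k) = 1" by (simp add: sg_def power_mult)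
  have A: "card {1..k} \<le> eig_mult (gc_verts (2 * k) V) (gc_adj (2 * k) E lab) 4"
  proof (rule main_family[OF assms(1) assms(5) Vne ev, of 1 "-1"])
    fix b c assume "b \<in> {1..k}" "c \<in> {1..k}"
    then show "GG (2 * k) 1 c b \<noteq> 0 \<longleftrightarrow> b = c" by (auto simp: GG_def)
  qed (use assms(6) in auto)
  have B: "card {1..k-1} \<le> eig_mult (gc_verts (2 * k) V) (gc_adj (2 * k) E lab) 2"
  proof (rule main_family[OF assms(1) assms(5) Vne ev, of "-1" 1])
    fix b c assume "b \<in> {1..k-1}" "c \<in> {1..k-1}"
    then show "GG (2 * k) (-1) c b \<noteq> 0 \<longleftrightarrow> b = c" by (auto simp: GG_def)
  qed (use assms(6) in auto)
  have "nat \<lceil>real k / 2\<rceil> \<le> k" by linarith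
  then show "eig_mult (gc_verts (2 * k) V) (gc_adj (2 * k) E lab) 4 \<ge> nat \<lceil>real k / 2\<rceil>"
    using A by simp
  have "nat \<lfloor>real k / 2\<rfloor> \<le> k - 1" using assms(6) by linarith
  then show "eig_mult (gc_verts (2 * k) V) (gc_adj (2 * k) E lab) 2 \<ge> nat \<lfloor>real k / 2\<rfloor>"
    using B by simp
qed


end
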